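(* Let $(G_N)$ be a family of nonempty graphs. If $\sup_N |V(\operatorname{core}(G_N))|<\infty$, then the set $\{\hat r_\infty(G_N): N\ge 1\}$ is finite.
   Context: All graphs are finite and simple; a graph is nonempty if it has at least one edge. $\operatorname{core}(G)$ is the graph obtained from $G$ by deleting all isolated vertices. $tK_2$ is a matching with $t$ edges. For graphs $F,G,H$, $F\to(G,H)$ means every red--blue coloring of $E(F)$ contains a red copy of $G$ or a blue copy of $H$, and $\hat r(G,H)=\min\{|E(F)|:F\to(G,H)\}$. For a nonempty graph $G$, $\hat r_\infty(G)=\lim_{t\to\infty}\frac{\hat r(tK_2,G)}{t\,|E(G)|}$ (this limit exists). *)

theory Defs
  imports Complex_Main
begin

text \<open>A finite simple graph is represented by its (finite) edge set, each edge a
2-element set of vertices. Vertices are natural numbers. The vertex set of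
core(G) is the union of the edges.\<close>

definition simple_graph :: "nat set set \<Rightarrow> bool" where
  "simple_graph E \<longleftrightarrow> finite E \<and> (\<forall>e\<in>E. card e = 2)"

definition core_vertices :: "nat set set \<Rightarrow> nat set" where
  "core_vertices E = \<Union>E"

definition contains_copy :: "nat set set \<Rightarrow> nat set set \<Rightarrow> bool" where
  "contains_copy H G \<longleftrightarrow>
     (\<exists>f. inj_on f (core_vertices G) \<and> (\<forall>e\<in>G. f ` e \<in> H))"

text \<open>F \<rightarrow> (G,H): every red/blue colouring of E(F) (red edges R) has a red G or a blue H.\<close>
definition arrows :: "nat set set \<Rightarrow> nat set set \<Rightarrow> nat set set \<Rightarrow> bool" where
  "arrows F G H \<longleftrightarrow> (\<forall>R. R \<subseteq> F \<longrightarrow> contains_copy R G \<or> contains_copy (F - R) H)"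

definition size_ramsey :: "nat set set \<Rightarrow> nat set set \<Rightarrow> nat" where
  "size_ramsey G H = (LEAST m. \<exists>F. simple_graph F \<and> card F = m \<and> arrows F G H)"

definition matching :: "nat \<Rightarrow> nat set set" where
  "matching t = {{2*i, 2*i+1} | i. i < t}"

definition r_infty :: "nat set set \<Rightarrow> real" where
  "r_infty G = lim (\<lambda>t. real (size_ramsey (matching t) G) / (real t * real (card G)))"

end

theory Submission
  imports Defs
begin

lemma cc_iso:
  assumes h: "inj_on h (\<Union>G)"
  shows "contains_copy H ((\<lambda>e. h ` e) ` G) \<longleftrightarrow> contains_copy H G"
proof
  assume "contains_copy H ((\<lambda>e. h ` e) ` G)"
  then obtain f where f: "inj_on f (h ` \<Union>G)" "\<forall>e\<in>G. f ` (h ` e) \<in> H"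
    unfolding contains_copy_def core_vertices_def image_Union[symmetric] by auto
  have "inj_on (f \<circ> h) (\<Union>G)" using f(1) h by (simp add: comp_inj_on)
  moreover have "\<forall>e\<in>G. (f \<circ> h) ` e \<in> H" using f(2) by (simp add: image_comp)
  ultimately show "contains_copy H G" unfolding contains_copy_def core_vertices_def by blast
next
  assume "contains_copy H G"
  then obtain f where f: "inj_on f (\<Union>G)" "\<forall>e\<in>G. f ` e \<in> H"
    unfolding contains_copy_def core_vertices_def by auto
  define g where "g = f \<circ> inv_into (\<Union>G) h"
  have "inj_on g (h ` \<Union>G)" unfolding g_def
    using f(1) inj_on_inv_into[of "h ` \<Union>G" h "\<Union>G"] h
    by (metis comp_inj_on image_subset_iff inv_into_image_cancel order_refl)
  moreover have "\<forall>e\<in>G. g ` (h ` e) \<in> H"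
  proof
    fix e assume e: "e \<in> G"
    have "g ` (h ` e) = f ` e" unfolding g_def image_comp[symmetric]
      using h e by (simp add: inv_into_image_cancel Union_upper)
    thus "g ` (h ` e) \<in> H" using f(2) e by simp
  qed
  ultimately show "contains_copy H ((\<lambda>e. h ` e) ` G)"
    unfolding contains_copy_def core_vertices_def image_Union[symmetric] by auto
qed

lemma r_infty_iso:
  assumes h: "inj_on h (\<Union>G)"
  shows "r_infty ((\<lambda>e. h ` e) ` G) = r_infty G"
proof -
  have a: "arrows F M ((\<lambda>e. h ` e) ` G) = arrows F M G" for F M
    unfolding arrows_def using cc_iso[OF h] by simp
  have c: "card ((\<lambda>e. h ` e) ` G) = card G"
  proof (rule card_image)
    show "inj_on (\<lambda>e. h ` e) G"
      by (rule inj_onI) (meson Union_upper h inj_on_image_eq_iff)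
  qed
  show ?thesis unfolding r_infty_def size_ramsey_def a c ..
qed

theorem proposition2p8:
  fixes G :: "nat \<Rightarrow> nat set set"
  assumes "\<And>N. N \<ge> 1 \<Longrightarrow> simple_graph (G N) \<and> G N \<noteq> {}"
    and "\<exists>B. \<forall>N\<ge>1. card (core_vertices (G N)) \<le> B"
  shows "finite {r_infty (G N) | N. N \<ge> 1}"
proof -
  obtain B where B: "\<forall>N\<ge>1. card (core_vertices (G N)) \<le> B" using assms(2) by blast
  have "{r_infty (G N) | N. N \<ge> 1} \<subseteq> r_infty ` Pow (Pow {0..<B})"
  proof
    fix x assume "x \<in> {r_infty (G N) | N. N \<ge> 1}"
    then obtain N where N: "N \<ge> 1" "x = r_infty (G N)" by blast
    have sg: "simple_graph (G N)" using assms(1) N(1) by blast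
    have fin: "finite (\<Union>(G N))" using sg unfolding simple_graph_def
      by (metis card.infinite finite_Union zero_neq_numeral)
    obtain h where hb: "bij_betw h (\<Union>(G N)) {0..<card (\<Union>(G N))}"
      using ex_bij_betw_finite_nat[OF fin] by blast
    have hi: "inj_on h (\<Union>(G N))" using hb bij_betw_def by blast
    have cb: "card (\<Union>(G N)) \<le> B" using B N(1) unfolding core_vertices_def by blast
    have "(\<lambda>e. h ` e) ` G N \<in> Pow (Pow {0..<B})"
    proof -
      have "h ` \<Union>(G N) \<subseteq> {0..<B}" using hb cb unfolding bij_betw_def by auto
      thus ?thesis by blast
    qed
    moreover have "x = r_infty ((\<lambda>e. h ` e) ` G N)" using r_infty_iso[OF hi] N(2) by simp
    ultimately show "x \<in> r_infty ` Pow (Pow {0..<B})" by blast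
  qed
  thus ?thesis by (rule finite_subset) simp
qed

end
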